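(* Let $(X,\tau)$ be a topological space with an operation $\gamma$ on $\tau$ and $A\subseteq X$. Then (1) $A$ is $\gamma^{*}$-semi-open if and only if $A\cap sbd_{\gamma^{*}}(A)=\emptyset$; (2) $A$ is $\gamma^{*}$-semi-closed if and only if $sbd_{\gamma^{*}}(A)\subseteq A$.
   Context: An operation on $\tau$ is a map $\gamma:\tau\to P(X)$, $V\mapsto V^\gamma$, with $V\subseteq V^\gamma$ for every $V\in\tau$. For $A\subseteq X$, $int_\gamma(A)=\{x\in A: \text{there is an open } N \text{ with } x\in N,\ N^\gamma\subseteq A\}$; $A$ is $\gamma$-open iff $A=int_\gamma(A)$. $cl_\gamma(A)$ is the set of $x\in X$ such that $U^\gamma\cap A\neq\emptyset$ for every open $U\ni x$. $A$ is $\gamma^{*}$-semi-open if there is a $\gamma$-open set $O$ with $O\subseteq A\subseteq cl_\gamma(O)$; $A$ is $\gamma^{*}$-semi-closed if $X-A$ is $\gamma^{*}$-semi-open. $scl_{\gamma^{*}}(A)$ is the intersection of all $\gamma^{*}$-semi-closed sets containing $A$; $sbd_{\gamma^{*}}(A)=scl_{\gamma^{*}}(A)\cap scl_{\gamma^{*}}(X-A)$. *)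

theory Defs
  imports "HOL-Analysis.Analysis"
begin

text \<open>An operation on the open sets of a topology T (X = topspace T):
  a map gamma from open sets to subsets of X with V contained in gamma V.
  gamma is a total HOL function; only its values on open sets matter.\<close>
definition operation :: "'a topology \<Rightarrow> ('a set \<Rightarrow> 'a set) \<Rightarrow> bool" where
  "operation T \<gamma> \<longleftrightarrow> (\<forall>V. openin T V \<longrightarrow> V \<subseteq> \<gamma> V \<and> \<gamma> V \<subseteq> topspace T)"

definition gamma_int :: "'a topology \<Rightarrow> ('a set \<Rightarrow> 'a set) \<Rightarrow> 'a set \<Rightarrow> 'a set" where
  "gamma_int T \<gamma> A = {x \<in> A. \<exists>N. openin T N \<and> x \<in> N \<and> \<gamma> N \<subseteq> A}"

definition gamma_open :: "'a topology \<Rightarrow> ('a set \<Rightarrow> 'a set) \<Rightarrow> 'a set \<Rightarrow> bool" where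
  "gamma_open T \<gamma> A \<longleftrightarrow> A = gamma_int T \<gamma> A"

definition gamma_cl :: "'a topology \<Rightarrow> ('a set \<Rightarrow> 'a set) \<Rightarrow> 'a set \<Rightarrow> 'a set" where
  "gamma_cl T \<gamma> A = {x \<in> topspace T. \<forall>U. openin T U \<and> x \<in> U \<longrightarrow> \<gamma> U \<inter> A \<noteq> {}}"

definition gamma_star_semi_open :: "'a topology \<Rightarrow> ('a set \<Rightarrow> 'a set) \<Rightarrow> 'a set \<Rightarrow> bool" where
  "gamma_star_semi_open T \<gamma> A \<longleftrightarrow> (\<exists>U. gamma_open T \<gamma> U \<and> U \<subseteq> A \<and> A \<subseteq> gamma_cl T \<gamma> U)"

definition gamma_star_semi_closed :: "'a topology \<Rightarrow> ('a set \<Rightarrow> 'a set) \<Rightarrow> 'a set \<Rightarrow> bool" where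
  "gamma_star_semi_closed T \<gamma> A \<longleftrightarrow> A \<subseteq> topspace T \<and> gamma_star_semi_open T \<gamma> (topspace T - A)"

definition gamma_star_scl :: "'a topology \<Rightarrow> ('a set \<Rightarrow> 'a set) \<Rightarrow> 'a set \<Rightarrow> 'a set" where
  "gamma_star_scl T \<gamma> A = \<Inter>{F. gamma_star_semi_closed T \<gamma> F \<and> A \<subseteq> F}"

definition gamma_star_sbd :: "'a topology \<Rightarrow> ('a set \<Rightarrow> 'a set) \<Rightarrow> 'a set \<Rightarrow> 'a set" where
  "gamma_star_sbd T \<gamma> A = gamma_star_scl T \<gamma> A \<inter> gamma_star_scl T \<gamma> (topspace T - A)"

end

theory Submission
  imports Defs
begin

lemma gopen_Union:
  assumes "\<forall>U\<in>\<U>. gamma_open T \<gamma> U"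
  shows "gamma_open T \<gamma> (\<Union>\<U>)"
  unfolding gamma_open_def
proof
  show "\<Union>\<U> \<subseteq> gamma_int T \<gamma> (\<Union>\<U>)"
  proof
    fix x assume "x \<in> \<Union>\<U>"
    then obtain U where U: "U \<in> \<U>" "x \<in> U" by blast
    then have "x \<in> gamma_int T \<gamma> U" using assms unfolding gamma_open_def by blast
    then obtain N where "openin T N" "x \<in> N" "\<gamma> N \<subseteq> U" unfolding gamma_int_def by blast
    then show "x \<in> gamma_int T \<gamma> (\<Union>\<U>)" using U unfolding gamma_int_def by blast
  qed
qed (auto simp: gamma_int_def)

lemma gcl_mono: "U \<subseteq> V \<Longrightarrow> gamma_cl T \<gamma> U \<subseteq> gamma_cl T \<gamma> V"
  unfolding gamma_cl_def by blast

lemma sopen_Union: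
  assumes "\<forall>A\<in>\<A>. gamma_star_semi_open T \<gamma> A"
  shows "gamma_star_semi_open T \<gamma> (\<Union>\<A>)"
proof -
  from assms obtain f where f: "\<forall>A\<in>\<A>. gamma_open T \<gamma> (f A) \<and> f A \<subseteq> A \<and> A \<subseteq> gamma_cl T \<gamma> (f A)"
    unfolding gamma_star_semi_open_def by metis
  let ?U = "\<Union>(f ` \<A>)"
  have "gamma_open T \<gamma> ?U" using f gopen_Union[of "f ` \<A>"] by blast
  moreover have "?U \<subseteq> \<Union>\<A>" using f by blast
  moreover have "\<Union>\<A> \<subseteq> gamma_cl T \<gamma> ?U"
  proof
    fix x assume "x \<in> \<Union>\<A>"
    then obtain A where A: "A \<in> \<A>" "x \<in> A" by blast
    then have "x \<in> gamma_cl T \<gamma> (f A)" using f by blast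
    moreover have "f A \<subseteq> ?U" using A by blast
    ultimately show "x \<in> gamma_cl T \<gamma> ?U" using gcl_mono by blast
  qed
  ultimately show ?thesis unfolding gamma_star_semi_open_def by blast
qed

lemma top_sclosed: "gamma_star_semi_closed T \<gamma> (topspace T)"
  unfolding gamma_star_semi_closed_def gamma_star_semi_open_def gamma_open_def gamma_int_def
  by auto

lemma scl_sub: "A \<subseteq> topspace T \<Longrightarrow> gamma_star_scl T \<gamma> A \<subseteq> topspace T"
  unfolding gamma_star_scl_def using top_sclosed by blast

lemma scl_ext: "A \<subseteq> gamma_star_scl T \<gamma> A"
  unfolding gamma_star_scl_def by blast

lemma scl_closed:
  assumes "A \<subseteq> topspace T"
  shows "gamma_star_semi_closed T \<gamma> (gamma_star_scl T \<gamma> A)"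
proof -
  let ?F = "{F. gamma_star_semi_closed T \<gamma> F \<and> A \<subseteq> F}"
  have eq: "topspace T - \<Inter>?F = \<Union>((\<lambda>F. topspace T - F) ` ?F)" by blast
  have "gamma_star_semi_open T \<gamma> (\<Union>((\<lambda>F. topspace T - F) ` ?F))"
    by (rule sopen_Union) (auto simp: gamma_star_semi_closed_def)
  then show ?thesis using scl_sub[OF assms, of \<gamma>] eq
    unfolding gamma_star_semi_closed_def gamma_star_scl_def by simp
qed

lemma scl_of_closed: "gamma_star_semi_closed T \<gamma> A \<Longrightarrow> gamma_star_scl T \<gamma> A = A"
  unfolding gamma_star_scl_def by blast

theorem theorem3p19:
  fixes T :: "'a topology" and \<gamma> :: "'a set \<Rightarrow> 'a set" and A :: "'a set"
  assumes "operation T \<gamma>" and "A \<subseteq> topspace T"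
  shows "(gamma_star_semi_open T \<gamma> A \<longleftrightarrow> A \<inter> gamma_star_sbd T \<gamma> A = {})
       \<and> (gamma_star_semi_closed T \<gamma> A \<longleftrightarrow> gamma_star_sbd T \<gamma> A \<subseteq> A)"
proof
  have XA: "topspace T - A \<subseteq> topspace T" by blast
  have dd: "topspace T - (topspace T - A) = A" using assms(2) by blast
  show "gamma_star_semi_open T \<gamma> A \<longleftrightarrow> A \<inter> gamma_star_sbd T \<gamma> A = {}"
  proof
    assume "gamma_star_semi_open T \<gamma> A"
    then have "gamma_star_semi_closed T \<gamma> (topspace T - A)"
      unfolding gamma_star_semi_closed_def using dd by simp
    then have "gamma_star_scl T \<gamma> (topspace T - A) = topspace T - A" by (rule scl_of_closed)
    then show "A \<inter> gamma_star_sbd T \<gamma> A = {}" unfolding gamma_star_sbd_def by blast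
  next
    assume h: "A \<inter> gamma_star_sbd T \<gamma> A = {}"
    have "gamma_star_scl T \<gamma> (topspace T - A) = topspace T - A"
      using h scl_ext[of A T \<gamma>] scl_ext[of "topspace T - A" T \<gamma>] scl_sub[OF XA, of \<gamma>]
      unfolding gamma_star_sbd_def by blast
    then have "gamma_star_semi_closed T \<gamma> (topspace T - A)" using scl_closed[OF XA, of \<gamma>] by simp
    then show "gamma_star_semi_open T \<gamma> A" unfolding gamma_star_semi_closed_def dd by simp
  qed
  show "gamma_star_semi_closed T \<gamma> A \<longleftrightarrow> gamma_star_sbd T \<gamma> A \<subseteq> A"
  proof
    assume "gamma_star_semi_closed T \<gamma> A"
    then show "gamma_star_sbd T \<gamma> A \<subseteq> A" using scl_of_closed unfolding gamma_star_sbd_def by blast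
  next
    assume h: "gamma_star_sbd T \<gamma> A \<subseteq> A"
    have "gamma_star_scl T \<gamma> A = A"
      using h scl_ext[of A T \<gamma>] scl_ext[of "topspace T - A" T \<gamma>] scl_sub[OF assms(2), of \<gamma>]
      unfolding gamma_star_sbd_def by blast
    then show "gamma_star_semi_closed T \<gamma> A" using scl_closed[OF assms(2), of \<gamma>] by simp
  qed
qed

end
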